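(* Let $w\in\mathfrak{S}_n$ with $\{k,k+1\}\subseteq\textsf{supp}(w)$. (a) Some reduced word for $w$ has the form (a word in letters $\le k$) followed by (a word in letters $\ge k+1$) if and only if there exists $x<k+1$ such that $\{w(1),\dots,w(k)\}=[1,k+1]\setminus\{x\}$ and $w^{-1}(x)>k+1$. (b) Some reduced word for $w$ has the form (a word in letters $\ge k+1$) followed by (a word in letters $\le k$) if and only if there exists $y>k+1$ such that $\{w(k+2),\dots,w(n)\}=[k+1,n]\setminus\{y\}$ and $w^{-1}(y)<k+1$. (c) The letters $k$ and $k+1$ are interlaced in $w$ if and only if there exist $i\in[1,k]$ and $j\in[k+2,n]$ such that $w(i)>k+1$ and $w(j)<k+1$.
   Context: Permutations are written in one-line notation and composed right to left; $\sigma_i=(i,i+1)$, and reduced words are sequences of subscripts of reduced expressions. $\textsf{supp}(w)$ is the set of letters appearing in reduced words of $w$. For $k,k+1\in\textsf{supp}(w)$: they have increasing orientation in $w$ if in every reduced word all occurrences of $k$ are to the left of all occurrences of $k+1$; decreasing orientation if all occurrences of $k$ are to the right of all occurrences of $k+1$; otherwise they are interlaced. *)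

theory Defs
  imports "HOL-Combinatorics.Transposition" "HOL-Combinatorics.Permutations"
begin

text \<open>Permutations of [1,n] are functions nat => nat with w permutes {1..n}.
  The simple transposition s_i = (i,i+1). A word [a1,...,am] denotes
  s_a1 o ... o s_am (composition right to left).\<close>

definition simple_trans :: "nat \<Rightarrow> nat \<Rightarrow> nat" where
  "simple_trans i = Transposition.transpose i (Suc i)"

definition word_perm :: "nat list \<Rightarrow> nat \<Rightarrow> nat" where
  "word_perm xs = foldr (\<lambda>a f. simple_trans a \<circ> f) xs id"

definition is_word :: "nat \<Rightarrow> (nat \<Rightarrow> nat) \<Rightarrow> nat list \<Rightarrow> bool" where
  "is_word n w xs \<longleftrightarrow> (\<forall>a\<in>set xs. 1 \<le> a \<and> a < n) \<and> word_perm xs = w"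

definition reduced_word :: "nat \<Rightarrow> (nat \<Rightarrow> nat) \<Rightarrow> nat list \<Rightarrow> bool" where
  "reduced_word n w xs \<longleftrightarrow> is_word n w xs \<and> (\<forall>ys. is_word n w ys \<longrightarrow> length xs \<le> length ys)"

definition supp_perm :: "nat \<Rightarrow> (nat \<Rightarrow> nat) \<Rightarrow> nat set" where
  "supp_perm n w = {a. \<exists>xs. reduced_word n w xs \<and> a \<in> set xs}"

definition increasing_orient :: "nat \<Rightarrow> (nat \<Rightarrow> nat) \<Rightarrow> nat \<Rightarrow> bool" where
  "increasing_orient n w k \<longleftrightarrow> (\<forall>xs. reduced_word n w xs \<longrightarrow>
     (\<forall>i j. i < length xs \<and> j < length xs \<and> xs ! i = k \<and> xs ! j = Suc k \<longrightarrow> i < j))"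

definition decreasing_orient :: "nat \<Rightarrow> (nat \<Rightarrow> nat) \<Rightarrow> nat \<Rightarrow> bool" where
  "decreasing_orient n w k \<longleftrightarrow> (\<forall>xs. reduced_word n w xs \<longrightarrow>
     (\<forall>i j. i < length xs \<and> j < length xs \<and> xs ! i = k \<and> xs ! j = Suc k \<longrightarrow> j < i))"

definition interlaced :: "nat \<Rightarrow> (nat \<Rightarrow> nat) \<Rightarrow> nat \<Rightarrow> bool" where
  "interlaced n w k \<longleftrightarrow> k \<in> supp_perm n w \<and> Suc k \<in> supp_perm n w \<and>
     \<not> increasing_orient n w k \<and> \<not> decreasing_orient n w k"

end

theory Submission
  imports Defs
begin


lemma st_apply: "simple_trans a x = (if x = a then Suc a else if x = Suc a then a else x)"
  by (simp add: simple_trans_def transpose_def)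

lemma st_st[simp]: "simple_trans a (simple_trans a x) = x"
  by (simp add: st_apply)

lemma wp_Nil[simp]: "word_perm [] = id"
  by (simp add: word_perm_def)

lemma wp_Cons[simp]: "word_perm (a#xs) = simple_trans a \<circ> word_perm xs"
  by (simp add: word_perm_def)

lemma wp_append: "word_perm (xs@ys) = word_perm xs \<circ> word_perm ys"
  by (induction xs) auto

lemma st_permutes: "1 \<le> a \<Longrightarrow> a < n \<Longrightarrow> simple_trans a permutes {1..n}"
  unfolding simple_trans_def by (rule permutes_swap_id) auto

lemma wp_permutes: "\<forall>a\<in>set xs. 1 \<le> a \<and> a < n \<Longrightarrow> word_perm xs permutes {1..n}"
proof (induction xs)
  case (Cons a xs)
  then have "word_perm xs permutes {1..n}" "1 \<le> a" "a < n" by auto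
  then show ?case by (simp only: wp_Cons) (rule permutes_compose, assumption, rule st_permutes)
qed simp

definition PInv :: "nat \<Rightarrow> (nat \<Rightarrow> nat) \<Rightarrow> (nat \<times> nat) set" where
  "PInv n f = {(p,q). 1 \<le> p \<and> p < q \<and> q \<le> n \<and> f q < f p}"

lemma finite_PInv[simp]: "finite (PInv n f)"
proof -
  have "PInv n f \<subseteq> {1..n} \<times> {1..n}" by (auto simp: PInv_def)
  then show ?thesis by (rule finite_subset) auto
qed

lemma PInv_id[simp]: "PInv n id = {}"
  by (auto simp: PInv_def)

lemma toggle_new: "inj f \<Longrightarrow> (p,q) \<in> PInv n (simple_trans a \<circ> f) \<Longrightarrow> (p,q) \<notin> PInv n f
   \<Longrightarrow> f p = a \<and> f q = Suc a"
  unfolding PInv_def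
  by (auto simp: st_apply split: if_splits)

lemma toggle_old: "inj f \<Longrightarrow> (p,q) \<in> PInv n f \<Longrightarrow> (p,q) \<notin> PInv n (simple_trans a \<circ> f)
   \<Longrightarrow> f p = Suc a \<and> f q = a"
  unfolding PInv_def
  apply (auto simp: st_apply split: if_splits)
  done

abbreviation symd :: "'a set \<Rightarrow> 'a set \<Rightarrow> 'a set" where
  "symd A B \<equiv> (A - B) \<union> (B - A)"

lemma toggle_card: assumes "inj f"
  shows "card (symd (PInv n (simple_trans a \<circ> f)) (PInv n f)) \<le> 1"
proof -
  have fin: "finite (symd (PInv n (simple_trans a \<circ> f)) (PInv n f))" by simp
  have P: "fst x < snd x \<and> ((f (fst x) = a \<and> f (snd x) = Suc a) \<or> (f (fst x) = Suc a \<and> f (snd x) = a))"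
    if h: "x \<in> symd (PInv n (simple_trans a \<circ> f)) (PInv n f)" for x
  proof -
    obtain p q where xpq: "x = (p,q)" by (cases x)
    have "p < q" using h xpq unfolding PInv_def by blast
    moreover have "(f p = a \<and> f q = Suc a) \<or> (f p = Suc a \<and> f q = a)"
      using h xpq toggle_new[OF assms, of p q n a] toggle_old[OF assms, of p q n a] by blast
    ultimately show ?thesis using xpq by simp
  qed
  have "\<forall>x\<in>symd (PInv n (simple_trans a \<circ> f)) (PInv n f). \<forall>y\<in>symd (PInv n (simple_trans a \<circ> f)) (PInv n f). x = y"
  proof (intro ballI)
    fix x y assume x: "x \<in> symd (PInv n (simple_trans a \<circ> f)) (PInv n f)" and y: "y \<in> symd (PInv n (simple_trans a \<circ> f)) (PInv n f)"
    obtain p q where xpq: "x = (p,q)" by (cases x)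
    obtain p' q' where ypq: "y = (p',q')" by (cases y)
    have ie: "\<And>u v. f u = f v \<Longrightarrow> u = v" using assms by (simp add: inj_eq)
    from P[OF x] P[OF y] xpq ypq have "p < q" "p' < q'"
      "(f p = a \<and> f q = Suc a) \<or> (f p = Suc a \<and> f q = a)"
      "(f p' = a \<and> f q' = Suc a) \<or> (f p' = Suc a \<and> f q' = a)" by auto
    then have "p' = p \<and> q' = q" by (elim disjE conjE; metis ie less_asym)
    then show "x = y" using xpq ypq by simp
  qed
  then show ?thesis using card_le_Suc0_iff_eq[OF fin] by simp
qed

lemma card_symd_word:
  assumes "f permutes {1..n}" "\<forall>a\<in>set xs. 1 \<le> a \<and> a < n"
  shows "card (symd (PInv n (word_perm xs \<circ> f)) (PInv n f)) \<le> length xs"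
  using assms(2)
proof (induction xs)
  case Nil
  then show ?case by simp
next
  case (Cons a xs)
  let ?g = "word_perm xs \<circ> f"
  have gp: "?g permutes {1..n}" using permutes_compose[OF assms(1) wp_permutes[of xs n]] Cons.prems by simp
  have "symd (PInv n (word_perm (a#xs) \<circ> f)) (PInv n f) \<subseteq>
        symd (PInv n (simple_trans a \<circ> ?g)) (PInv n ?g) \<union> symd (PInv n ?g) (PInv n f)"
    by (auto simp: comp_assoc)
  then have "card (symd (PInv n (word_perm (a#xs) \<circ> f)) (PInv n f)) \<le>
        card (symd (PInv n (simple_trans a \<circ> ?g)) (PInv n ?g) \<union> symd (PInv n ?g) (PInv n f))"
    by (intro card_mono) auto
  also have "\<dots> \<le> card (symd (PInv n (simple_trans a \<circ> ?g)) (PInv n ?g)) + card (symd (PInv n ?g) (PInv n f))"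
    by (rule card_Un_le)
  also have "\<dots> \<le> 1 + length xs"
    using toggle_card[OF permutes_inj[OF gp], of n a] Cons.IH Cons.prems by (simp only: list.set ball_simps) linarith
  finally show ?case by (simp add: o_def)
qed

lemma card_PInv_le: "\<forall>a\<in>set xs. 1 \<le> a \<and> a < n \<Longrightarrow> card (PInv n (word_perm xs)) \<le> length xs"
  using card_symd_word[of id n xs] by simp

lemma PInv_empty_id:
  assumes w: "w permutes {1..n}" and e: "PInv n w = {}"
  shows "w = id"
proof (rule ccontr)
  assume "w \<noteq> id"
  then have "\<exists>x. w x \<noteq> x" by auto
  define x where "x = (LEAST x. w x \<noteq> x)"
  have wx: "w x \<noteq> x" unfolding x_def by (rule LeastI_ex) fact
  have small: "y < x \<Longrightarrow> w y = y" for y unfolding x_def using not_less_Least by blast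
  have xin: "x \<in> {1..n}" using wx permutes_not_in[OF w] by blast
  obtain q where q: "w q = x" using permutes_surj[OF w] by (metis surjD)
  have qin: "q \<in> {1..n}" using q xin permutes_in_image[OF w, of q] by simp
  have "q \<noteq> x" using q wx by auto
  moreover have "\<not> q < x" using small q by fastforce
  ultimately have xq: "x < q" by simp
  have "\<not> w x < x" using small permutes_inj[OF w] by (metis injD less_irrefl)
  then have "x < w x" using wx by simp
  then have "(x, q) \<in> PInv n w" using xq q xin qin by (auto simp: PInv_def)
  then show False using e by simp
qed

lemma desc_aux: "(b::nat) < c \<Longrightarrow> h c < (h b::nat) \<Longrightarrow> \<exists>a. b \<le> a \<and> a < c \<and> h (Suc a) < h a"
proof (induction c)
  case 0 then show ?case by simp
next
  case (Suc c)
  show ?case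
  proof (cases "h (Suc c) < h c")
    case True then show ?thesis using Suc.prems by (intro exI[of _ c]) auto
  next
    case False
    then have "h c < h b" using Suc by simp
    then have "b \<noteq> c" by auto
    then have "b < c" using Suc by simp
    then show ?thesis using Suc \<open>h c < h b\<close> by (metis less_SucI)
  qed
qed

lemma descent:
  assumes w: "w permutes {1..n}" and ne: "PInv n w \<noteq> {}"
  shows "\<exists>a. 1 \<le> a \<and> a < n \<and> card (PInv n (simple_trans a \<circ> w)) < card (PInv n w)"
proof -
  obtain p0 q0 where pq0: "(p0,q0) \<in> PInv n w" using ne by auto
  have iw: "inv w permutes {1..n}" using permutes_inv[OF w] .
  from pq0 have "w q0 < w p0" "inv w (w p0) < inv w (w q0)"
    by (auto simp: PInv_def permutes_inverses[OF w])
  then obtain a where a: "w q0 \<le> a" "a < w p0" "inv w (Suc a) < inv w a"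
    using desc_aux[of "w q0" "w p0" "inv w"] by blast
  have "q0 \<in> {1..n}" "p0 \<in> {1..n}" using pq0 by (auto simp: PInv_def)
  then have "w q0 \<in> {1..n}" "w p0 \<in> {1..n}" using permutes_in_image[OF w] by auto
  then have a1: "1 \<le> a" "a < n" using a by auto
  define p where "p = inv w (Suc a)"
  define q where "q = inv w a"
  have wp: "w p = Suc a" and wq: "w q = a" unfolding p_def q_def by (simp_all add: permutes_inverses[OF w])
  have pin: "p \<in> {1..n}" using a1 permutes_in_image[OF iw] unfolding p_def by auto
  have qin: "q \<in> {1..n}" using a1 permutes_in_image[OF iw] unfolding q_def by auto
  have pq: "p < q" using a unfolding p_def q_def by simp
  have inW: "(p,q) \<in> PInv n w" using pin qin pq wp wq by (auto simp: PInv_def)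
  have notS: "(p,q) \<notin> PInv n (simple_trans a \<circ> w)" using wp wq by (auto simp: PInv_def st_apply)
  have sub: "PInv n (simple_trans a \<circ> w) \<subseteq> PInv n w"
  proof
    fix x assume x: "x \<in> PInv n (simple_trans a \<circ> w)"
    show "x \<in> PInv n w"
    proof (rule ccontr)
      assume "x \<notin> PInv n w"
      then have "w (fst x) = a \<and> w (snd x) = Suc a"
        using toggle_new[OF permutes_inj[OF w], of "fst x" "snd x" n a] x by auto
      then have "fst x = q" "snd x = p" using wp wq permutes_inj[OF w] by (metis injD)+
      then show False using x pq by (auto simp: PInv_def)
    qed
  qed
  have "PInv n (simple_trans a \<circ> w) \<subset> PInv n w" using sub inW notS by blast
  then have "card (PInv n (simple_trans a \<circ> w)) < card (PInv n w)" by (intro psubset_card_mono) auto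
  then show ?thesis using a1 by blast
qed

lemma exists_word:
  "w permutes {1..n} \<Longrightarrow> \<exists>xs. is_word n w xs \<and> length xs \<le> card (PInv n w)"
proof (induction "card (PInv n w)" arbitrary: w rule: less_induct)
  case less
  show ?case
  proof (cases "PInv n w = {}")
    case True
    then have "w = id" using PInv_empty_id less by blast
    then show ?thesis by (intro exI[of _ "[]"]) (simp add: is_word_def)
  next
    case False
    obtain a where a: "1 \<le> a" "a < n" "card (PInv n (simple_trans a \<circ> w)) < card (PInv n w)"
      using descent[OF less.prems False] by blast
    have "simple_trans a \<circ> w permutes {1..n}"
      using permutes_compose[OF less.prems st_permutes[OF a(1,2)]] .
    then obtain xs where xs: "is_word n (simple_trans a \<circ> w) xs" "length xs \<le> card (PInv n (simple_trans a \<circ> w))"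
      using less.hyps[OF a(3)] by blast
    have "word_perm (a#xs) = w" using xs(1) by (auto simp: is_word_def fun_eq_iff)
    then have "is_word n w (a#xs)" using xs(1) a by (auto simp: is_word_def)
    then show ?thesis using xs(2) a(3) by (intro exI[of _ "a#xs"]) auto
  qed
qed

lemma is_word_permutes: "is_word n w xs \<Longrightarrow> w permutes {1..n}"
  unfolding is_word_def using wp_permutes by blast

lemma reduced_iff: "reduced_word n w xs \<longleftrightarrow> is_word n w xs \<and> length xs = card (PInv n w)"
proof
  assume r: "reduced_word n w xs"
  then have iw: "is_word n w xs" by (simp add: reduced_word_def)
  obtain ys where "is_word n w ys" "length ys \<le> card (PInv n w)"
    using exists_word[OF is_word_permutes[OF iw]] by blast
  moreover have "card (PInv n w) \<le> length xs" using card_PInv_le[of xs n] iw by (auto simp: is_word_def)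
  moreover have "length xs \<le> length ys" using r \<open>is_word n w ys\<close> by (simp add: reduced_word_def)
  ultimately show "is_word n w xs \<and> length xs = card (PInv n w)"
    using iw by linarith
next
  assume "is_word n w xs \<and> length xs = card (PInv n w)"
  then show "reduced_word n w xs" unfolding reduced_word_def
    using card_PInv_le by (metis is_word_def)
qed

lemma exists_reduced: "w permutes {1..n} \<Longrightarrow> \<exists>xs. reduced_word n w xs"
proof -
  assume w: "w permutes {1..n}"
  obtain xs where xs: "is_word n w xs" "length xs \<le> card (PInv n w)" using exists_word[OF w] by blast
  moreover have "card (PInv n w) \<le> length xs" using card_PInv_le[of xs n] xs by (auto simp: is_word_def)
  ultimately show ?thesis using reduced_iff[of n w xs] by (intro exI[of _ xs]) auto
qed

lemma suffix_reduced: "reduced_word n w (ys @ zs) \<Longrightarrow> reduced_word n (word_perm zs) zs"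
  unfolding reduced_word_def is_word_def
proof (intro conjI allI impI)
  assume r: "((\<forall>a\<in>set (ys @ zs). 1 \<le> a \<and> a < n) \<and> word_perm (ys @ zs) = w) \<and>
    (\<forall>ys'. (\<forall>a\<in>set ys'. 1 \<le> a \<and> a < n) \<and> word_perm ys' = w \<longrightarrow> length (ys @ zs) \<le> length ys')"
  then show "\<forall>a\<in>set zs. 1 \<le> a \<and> a < n" by auto
  show "word_perm zs = word_perm zs" by simp
  fix zs' assume z: "(\<forall>a\<in>set zs'. 1 \<le> a \<and> a < n) \<and> word_perm zs' = word_perm zs"
  then have "(\<forall>a\<in>set (ys@zs'). 1 \<le> a \<and> a < n) \<and> word_perm (ys@zs') = w"
    using r by (auto simp: wp_append)
  then have "length (ys @ zs) \<le> length (ys @ zs')" using r by blast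
  then show "length zs \<le> length zs'" by simp
qed

lemma prefix_reduced: "reduced_word n w (ys @ zs) \<Longrightarrow> reduced_word n (word_perm ys) ys"
  unfolding reduced_word_def is_word_def
proof (intro conjI allI impI)
  assume r: "((\<forall>a\<in>set (ys @ zs). 1 \<le> a \<and> a < n) \<and> word_perm (ys @ zs) = w) \<and>
    (\<forall>ys'. (\<forall>a\<in>set ys'. 1 \<le> a \<and> a < n) \<and> word_perm ys' = w \<longrightarrow> length (ys @ zs) \<le> length ys')"
  then show "\<forall>a\<in>set ys. 1 \<le> a \<and> a < n" by auto
  show "word_perm ys = word_perm ys" by simp
  fix ys' assume z: "(\<forall>a\<in>set ys'. 1 \<le> a \<and> a < n) \<and> word_perm ys' = word_perm ys"
  then have "(\<forall>a\<in>set (ys'@zs). 1 \<le> a \<and> a < n) \<and> word_perm (ys'@zs) = w"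
    using r by (auto simp: wp_append)
  then have "length (ys @ zs) \<le> length (ys' @ zs)" using r by blast
  then show "length ys \<le> length ys'" by simp
qed

lemma suffix_PInv:
  assumes r: "reduced_word n w (ys @ zs)"
  shows "PInv n (word_perm zs) \<subseteq> PInv n w"
proof -
  have iw: "is_word n w (ys@zs)" using r by (simp add: reduced_word_def)
  have lett: "\<forall>a\<in>set ys. 1 \<le> a \<and> a < n" "\<forall>a\<in>set zs. 1 \<le> a \<and> a < n"
    using iw by (auto simp: is_word_def)
  have w: "w = word_perm ys \<circ> word_perm zs" using iw by (simp add: is_word_def wp_append)
  let ?A = "PInv n (word_perm zs)" and ?B = "PInv n w"
  have cA: "card ?A \<le> length zs" using card_PInv_le lett by blast
  have cAB: "card (symd ?B ?A) \<le> length ys"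
    using card_symd_word[OF wp_permutes[OF lett(2)] lett(1)] w by simp
  have cB: "card ?B = length ys + length zs" using r reduced_iff by simp
  have "card ?B \<le> card (?A \<inter> ?B) + card (?B - ?A)"
  proof -
    have "?B = (?A \<inter> ?B) \<union> (?B - ?A)" by auto
    then have "card ?B = card ((?A \<inter> ?B) \<union> (?B - ?A))" by simp
    also have "\<dots> \<le> card (?A \<inter> ?B) + card (?B - ?A)" by (rule card_Un_le)
    finally show ?thesis .
  qed
  moreover have "card ?A = card (?A \<inter> ?B) + card (?A - ?B)"
  proof -
    have "?A = (?A \<inter> ?B) \<union> (?A - ?B)" by auto
    then have "card ?A = card ((?A \<inter> ?B) \<union> (?A - ?B))" by simp
    also have "\<dots> = card (?A \<inter> ?B) + card (?A - ?B)" by (rule card_Un_disjoint) auto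
    finally show ?thesis .
  qed
  moreover have "card (symd ?B ?A) = card (?B - ?A) + card (?A - ?B)"
    by (rule card_Un_disjoint) auto
  ultimately have "card (?A - ?B) = 0" using cA cAB cB by linarith
  then show ?thesis by simp
qed

lemma st_image: "1 \<le> a \<Longrightarrow> a \<noteq> i \<Longrightarrow> simple_trans a ` {1..i} = {1..i}"
  unfolding simple_trans_def by (rule transpose_image_eq) auto

lemma wp_fix_set: "1 \<le> i \<Longrightarrow> \<forall>a\<in>set xs. 1 \<le> a \<Longrightarrow> i \<notin> set xs \<Longrightarrow> word_perm xs ` {1..i} = {1..i}"
proof (induction xs)
  case (Cons a xs)
  then have "word_perm xs ` {1..i} = {1..i}" by auto
  moreover have "word_perm (a#xs) ` {1..i} = simple_trans a ` (word_perm xs ` {1..i})" by (simp add: image_comp)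
  ultimately show ?case using Cons.prems st_image[of a i] by simp
qed simp

lemma reduced_letter:
  assumes r: "reduced_word n w xs" and i: "i \<in> set xs"
  shows "w ` {1..i} \<noteq> {1..i}"
proof
  assume wi: "w ` {1..i} = {1..i}"
  obtain ys zs where xs: "xs = ys @ i # zs" and nz: "i \<notin> set zs"
    using split_list_last[OF i] by blast
  have iw: "is_word n w xs" using r by (simp add: reduced_word_def)
  have lett: "\<forall>a\<in>set zs. 1 \<le> a \<and> a < n" "1 \<le> i" "i < n" using iw xs by (auto simp: is_word_def)
  let ?f = "word_perm zs"
  have fp: "?f permutes {1..n}" using wp_permutes lett by blast
  have fi: "?f ` {1..i} = {1..i}" using wp_fix_set lett nz by blast
  obtain p where p: "?f p = i" using permutes_surj[OF fp] by (metis surjD)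
  obtain q where q: "?f q = Suc i" using permutes_surj[OF fp] by (metis surjD)
  have pi: "p \<in> {1..i}" using p fi lett(2) permutes_inj[OF fp]
    by (metis atLeastAtMost_iff imageE injD le_refl)
  have qn: "q \<in> {1..n}" using q lett permutes_in_image[OF fp, of q] by auto
  have "q \<notin> {1..i}" using q fi by (metis Suc_n_not_le_n atLeastAtMost_iff image_eqI)
  then have qi: "i < q" using qn by auto
  have "(p, q) \<in> PInv n (word_perm (i # zs))" using pi qi qn p q by (auto simp: PInv_def st_apply)
  moreover have "PInv n (word_perm (i # zs)) \<subseteq> PInv n w" using suffix_PInv[of n w ys "i#zs"] r xs by simp
  ultimately have "w q < w p" by (auto simp: PInv_def)
  have wp: "w permutes {1..n}" using is_word_permutes iw by blast
  have "w p \<le> i" using wi pi by auto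
  moreover have "w q \<notin> {1..i}" using wi \<open>q \<notin> {1..i}\<close> permutes_inj[OF wp]
    by (metis (no_types, lifting) image_iff inj_image_mem_iff)
  then have "i < w q" using permutes_in_image[OF wp, of q] qn by auto
  ultimately show False using \<open>w q < w p\<close> by simp
qed



lemma perm_restrict: assumes "f permutes T" "\<And>x. x \<notin> S \<Longrightarrow> f x = x" shows "f permutes S"
proof -
  have "\<forall>y. \<exists>!x. f x = y" using assms(1) by (simp add: permutes_def)
  moreover have "\<forall>x. x \<notin> S \<longrightarrow> f x = x" using assms(2) by blast
  ultimately show ?thesis by (simp add: permutes_def)
qed

lemma perm_range: "f permutes {1..n} \<Longrightarrow> x \<in> {1..n} \<Longrightarrow> f x \<in> {1..n}"
  by (simp only: permutes_in_image)

lemma perm_pre: assumes "f permutes {1..n}" "y \<in> {1..n}"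
  obtains x where "x \<in> {1..n}" "f x = y"
proof -
  have "y \<in> f ` {1..n}" using permutes_image[OF assms(1)] assms(2) by simp
  then show ?thesis using that by blast
qed

lemma asc:
  assumes r: "reduced_word n w (a # zs)" and p: "word_perm zs p = a" and q: "word_perm zs q = Suc a"
  shows "p < q"
proof (rule ccontr)
  assume "\<not> p < q"
  moreover have "p \<noteq> q" using p q by auto
  ultimately have qp: "q < p" by simp
  have iw: "is_word n w (a # zs)" using r by (simp add: reduced_word_def)
  have lett: "\<forall>b\<in>set zs. 1 \<le> b \<and> b < n" "1 \<le> a" "a < n" using iw by (auto simp: is_word_def)
  let ?f = "word_perm zs"
  have fp: "?f permutes {1..n}" using wp_permutes lett by blast
  have pin: "p \<in> {1..n}" using p lett permutes_in_image[OF fp, of p] by auto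
  have qin: "q \<in> {1..n}" using q lett permutes_in_image[OF fp, of q] by auto
  have w: "w = simple_trans a \<circ> ?f" using iw by (simp add: is_word_def)
  have sub: "PInv n w \<subseteq> PInv n ?f"
  proof
    fix x assume x: "x \<in> PInv n w"
    show "x \<in> PInv n ?f"
    proof (rule ccontr)
      assume "x \<notin> PInv n ?f"
      then have "?f (fst x) = a \<and> ?f (snd x) = Suc a"
        using toggle_new[OF permutes_inj[OF fp], of "fst x" "snd x" n a] x w by auto
      then have "fst x = p" "snd x = q" using p q permutes_inj[OF fp] by (metis injD)+
      then show False using x qp by (auto simp: PInv_def)
    qed
  qed
  have "card (PInv n w) \<le> card (PInv n ?f)" using sub by (intro card_mono) auto
  moreover have "card (PInv n w) = Suc (length zs)" using r reduced_iff by simp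
  moreover have "card (PInv n ?f) \<le> length zs" using card_PInv_le lett by blast
  ultimately show False by simp
qed

lemma asc_suffix:
  assumes r: "reduced_word n w (ys @ a # zs)" and p: "word_perm zs p = a" and q: "word_perm zs q = Suc a"
  shows "p < q"
  using asc[OF suffix_reduced[OF r] p q] .

lemma wp_fix_low: "\<forall>a\<in>set xs. Suc k \<le> a \<Longrightarrow> x \<le> k \<Longrightarrow> word_perm xs x = x"
  by (induction xs) (auto simp: st_apply)

lemma wp_fix_high: "\<forall>a\<in>set xs. 1 \<le> a \<and> a \<le> k \<Longrightarrow> x \<notin> {1..Suc k} \<Longrightarrow> word_perm xs x = x"
  by (induction xs) (auto simp: st_apply)

lemma wp_fix_mid: "\<forall>a\<in>set xs. a \<noteq> k \<and> a \<noteq> Suc k \<Longrightarrow> word_perm xs (Suc k) = Suc k"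
  by (induction xs) (auto simp: st_apply)

definition PE :: "nat \<Rightarrow> (nat \<Rightarrow> nat) \<Rightarrow> bool" where
  "PE k f \<longleftrightarrow> (\<exists>i\<in>{1..k}. Suc k < f i)"

definition PF :: "nat \<Rightarrow> nat \<Rightarrow> (nat \<Rightarrow> nat) \<Rightarrow> bool" where
  "PF n k f \<longleftrightarrow> (\<exists>j\<in>{Suc (Suc k)..n}. f j < Suc k)"

lemma st_gt: "a \<noteq> Suc k \<Longrightarrow> Suc k < v \<Longrightarrow> Suc k < simple_trans a v"
  by (auto simp: st_apply)

lemma st_lt: "a \<noteq> k \<Longrightarrow> v < Suc k \<Longrightarrow> simple_trans a v < Suc k"
  by (auto simp: st_apply)

lemma PE_step:
  assumes r: "reduced_word n w (a # zs)" and pe: "PE k (word_perm zs)"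
  shows "PE k w"
proof -
  have iw: "is_word n w (a # zs)" using r by (simp add: reduced_word_def)
  have lett: "\<forall>b\<in>set zs. 1 \<le> b \<and> b < n" "1 \<le> a" "a < n" using iw by (auto simp: is_word_def)
  let ?f = "word_perm zs"
  have fp: "?f permutes {1..n}" using wp_permutes lett by blast
  have w: "w = simple_trans a \<circ> ?f" using iw by (simp add: is_word_def)
  obtain i where i: "i \<in> {1..k}" "Suc k < ?f i" using pe by (auto simp: PE_def)
  show ?thesis
  proof (cases "a = Suc k \<and> ?f i = Suc (Suc k)")
    case False
    then have "Suc k < w i" using i w by (auto simp: st_apply)
    then show ?thesis using i by (auto simp: PE_def)
  next
    case True
    have "Suc k \<in> {1..n}" using True lett by auto
    then obtain p where p: "p \<in> {1..n}" "?f p = Suc k" using perm_pre[OF fp] by blast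
    have "p < i" using asc[OF r] p True by simp
    then have "p \<in> {1..k}" using p i by auto
    moreover have "w p = Suc (Suc k)" using w p True by (simp add: st_apply)
    ultimately show ?thesis unfolding PE_def by (intro bexI[of _ p]) auto
  qed
qed

lemma PF_step:
  assumes r: "reduced_word n w (a # zs)" and pf: "PF n k (word_perm zs)"
  shows "PF n k w"
proof -
  have iw: "is_word n w (a # zs)" using r by (simp add: reduced_word_def)
  have lett: "\<forall>b\<in>set zs. 1 \<le> b \<and> b < n" "1 \<le> a" "a < n" using iw by (auto simp: is_word_def)
  let ?f = "word_perm zs"
  have fp: "?f permutes {1..n}" using wp_permutes lett by blast
  have w: "w = simple_trans a \<circ> ?f" using iw by (simp add: is_word_def)
  obtain j where j: "j \<in> {Suc (Suc k)..n}" "?f j < Suc k" using pf by (auto simp: PF_def)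
  show ?thesis
  proof (cases "a = k \<and> ?f j = k")
    case False
    then have "w j < Suc k" using j w by (auto simp: st_apply)
    then show ?thesis using j by (auto simp: PF_def)
  next
    case True
    have "Suc k \<in> {1..n}" using True lett by auto
    then obtain q where q: "q \<in> {1..n}" "?f q = Suc k" using perm_pre[OF fp] by blast
    have "j < q" using asc[OF r] q True by simp
    then have "q \<in> {Suc (Suc k)..n}" using q j by auto
    moreover have "w q = k" using w q True by (simp add: st_apply)
    ultimately show ?thesis unfolding PF_def by (intro bexI[of _ q]) auto
  qed
qed

lemma PE_mono: "reduced_word n w (ys @ zs) \<Longrightarrow> PE k (word_perm zs) \<Longrightarrow> PE k w"
proof (induction ys arbitrary: w)
  case Nil
  then show ?case by (simp add: reduced_word_def is_word_def)
next
  case (Cons a ys)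
  have "reduced_word n (word_perm (ys @ zs)) (ys @ zs)" using suffix_reduced[of n w "[a]" "ys @ zs"] Cons.prems by simp
  then have "PE k (word_perm (ys @ zs))" using Cons by blast
  then show ?case using PE_step[of n w a "ys @ zs" k] Cons.prems by simp
qed

lemma PF_mono: "reduced_word n w (ys @ zs) \<Longrightarrow> PF n k (word_perm zs) \<Longrightarrow> PF n k w"
proof (induction ys arbitrary: w)
  case Nil
  then show ?case by (simp add: reduced_word_def is_word_def)
next
  case (Cons a ys)
  have "reduced_word n (word_perm (ys @ zs)) (ys @ zs)" using suffix_reduced[of n w "[a]" "ys @ zs"] Cons.prems by simp
  then have "PF n k (word_perm (ys @ zs))" using Cons by blast
  then show ?case using PF_step[of n w a "ys @ zs" k] Cons.prems by simp
qed



lemma nth_split_pat: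
  assumes "x \<in> set B"
  shows "\<exists>j. j < length B \<and> B ! j = x"
  using assms by (simp add: in_set_conv_nth)

lemma no_pat1:
  assumes "reduced_word n w xs" "\<not> PE k w" "1 \<le> k"
  shows "\<not> (\<exists>i j. j < i \<and> i < length xs \<and> xs ! j = Suc k \<and> xs ! i = k)"
  using assms
proof (induction xs arbitrary: w)
  case Nil
  then show ?case by simp
next
  case (Cons a zs)
  let ?f = "word_perm zs"
  have rz: "reduced_word n ?f zs" using suffix_reduced[of n w "[a]" zs] Cons.prems by simp
  have npf: "\<not> PE k ?f" using PE_mono[of n w "[a]" zs k] Cons.prems by auto
  have IH: "\<not> (\<exists>i j. j < i \<and> i < length zs \<and> zs ! j = Suc k \<and> zs ! i = k)"
    using Cons.IH[OF rz npf Cons.prems(3)] .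
  show ?case
  proof
    assume "\<exists>i j. j < i \<and> i < length (a # zs) \<and> (a # zs) ! j = Suc k \<and> (a # zs) ! i = k"
    then obtain i j where ij: "j < i" "i < length (a # zs)" "(a # zs) ! j = Suc k" "(a # zs) ! i = k" by blast
    show False
    proof (cases j)
      case (Suc j')
      then obtain i' where "i = Suc i'" using ij by (cases i) auto
      then show False using IH ij Suc by auto
    next
      case 0
      then have a: "a = Suc k" using ij by simp
      obtain i' where i': "i = Suc i'" using ij 0 by (cases i) auto
      have "k \<in> set zs" using ij i' by (auto simp: in_set_conv_nth)
      then obtain B C where zs: "zs = B @ k # C" and kB: "k \<notin> set B" using split_list_first by metis
      have k1B: "Suc k \<notin> set B"
      proof
        assume "Suc k \<in> set B"
        then obtain j2 where j2: "j2 < length B" "B ! j2 = Suc k" by (auto simp: in_set_conv_nth)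
        have "zs ! j2 = Suc k" using j2 zs by (simp add: nth_append)
        moreover have "zs ! length B = k" using zs by simp
        moreover have "length B < length zs" using zs by simp
        ultimately show False using IH j2(1) by blast
      qed
      have r: "reduced_word n w ((a # B) @ k # C)" using Cons.prems(1) zs by simp
      have iw: "is_word n w (a # zs)" using Cons.prems(1) by (simp add: reduced_word_def)
      have lett: "\<forall>b\<in>set C. 1 \<le> b \<and> b < n" "k < n" using iw zs by (auto simp: is_word_def)
      let ?g = "word_perm C"
      have gp: "?g permutes {1..n}" using wp_permutes lett by blast
      obtain p where p: "p \<in> {1..n}" "?g p = k" using perm_pre[OF gp, of k] lett Cons.prems(3) by auto
      obtain q where q: "q \<in> {1..n}" "?g q = Suc k"
        using perm_pre[OF gp, of "Suc k"] lett Cons.prems(3) iw a by (auto simp: is_word_def)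
      have pq: "p < q" using asc_suffix[OF r p(2) q(2)] .
      have fB: "word_perm B (Suc k) = Suc k" using wp_fix_mid[of B k] kB k1B by blast
      have wdef: "w = simple_trans a \<circ> word_perm B \<circ> simple_trans k \<circ> ?g"
        using iw zs by (simp add: is_word_def wp_append comp_assoc)
      have "w p = Suc (Suc k)" using wdef p fB a by (simp add: st_apply)
      then have pk: "k < p" using Cons.prems(2) p unfolding PE_def by force
      have r': "reduced_word n w (((a # B) @ [k]) @ C)" using r by simp
      have npg: "\<not> PE k ?g" using PE_mono[OF r', of k] Cons.prems(2) by blast
      have sub: "?g ` {1..k} \<subseteq> {1..k - 1}"
      proof
        fix y assume "y \<in> ?g ` {1..k}"
        then obtain i0 where i0: "i0 \<in> {1..k}" "y = ?g i0" by blast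
        have "i0 \<in> {1..n}" using i0 lett by auto
        then have "?g i0 \<in> {1..n}" using perm_range[OF gp] by blast
        moreover have "?g i0 \<le> Suc k" using npg i0 unfolding PE_def by force
        moreover have "?g i0 \<noteq> k"
        proof
          assume "?g i0 = k"
          then have "?g i0 = ?g p" using p(2) by simp
          then have "i0 = p" by (rule injD[OF permutes_inj[OF gp]])
          then show False using i0 pk by simp
        qed
        moreover have "?g i0 \<noteq> Suc k"
        proof
          assume "?g i0 = Suc k"
          then have "?g i0 = ?g q" using q(2) by simp
          then have "i0 = q" by (rule injD[OF permutes_inj[OF gp]])
          then show False using i0 pk pq by simp
        qed
        ultimately show "y \<in> {1..k - 1}" using i0 by auto
      qed
      have "card (?g ` {1..k}) = k" using card_image[OF permutes_inj_on[OF gp]] by simp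
      moreover have "card (?g ` {1..k}) \<le> k - 1" using card_mono[OF _ sub] by simp
      ultimately show False using Cons.prems(3) by simp
    qed
  qed
qed

lemma no_pat2:
  assumes "reduced_word n w xs" "\<not> PF n k w" "Suc k < n"
  shows "\<not> (\<exists>i j. j < i \<and> i < length xs \<and> xs ! j = k \<and> xs ! i = Suc k)"
  using assms
proof (induction xs arbitrary: w)
  case Nil
  then show ?case by simp
next
  case (Cons a zs)
  let ?f = "word_perm zs"
  have rz: "reduced_word n ?f zs" using suffix_reduced[of n w "[a]" zs] Cons.prems by simp
  have npf: "\<not> PF n k ?f" using PF_mono[of n w "[a]" zs k] Cons.prems by auto
  have IH: "\<not> (\<exists>i j. j < i \<and> i < length zs \<and> zs ! j = k \<and> zs ! i = Suc k)"
    using Cons.IH[OF rz npf Cons.prems(3)] .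
  show ?case
  proof
    assume "\<exists>i j. j < i \<and> i < length (a # zs) \<and> (a # zs) ! j = k \<and> (a # zs) ! i = Suc k"
    then obtain i j where ij: "j < i" "i < length (a # zs)" "(a # zs) ! j = k" "(a # zs) ! i = Suc k" by blast
    show False
    proof (cases j)
      case (Suc j')
      then obtain i' where "i = Suc i'" using ij by (cases i) auto
      then show False using IH ij Suc by auto
    next
      case 0
      then have a: "a = k" using ij by simp
      obtain i' where i': "i = Suc i'" using ij 0 by (cases i) auto
      have "Suc k \<in> set zs" using ij i' by (auto simp: in_set_conv_nth)
      then obtain B C where zs: "zs = B @ Suc k # C" and kB: "Suc k \<notin> set B" using split_list_first by metis
      have k1B: "k \<notin> set B"
      proof
        assume "k \<in> set B"
        then obtain j2 where j2: "j2 < length B" "B ! j2 = k" by (auto simp: in_set_conv_nth)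
        have "zs ! j2 = k" using j2 zs by (simp add: nth_append)
        moreover have "zs ! length B = Suc k" using zs by simp
        moreover have "length B < length zs" using zs by simp
        ultimately show False using IH j2(1) by blast
      qed
      have r: "reduced_word n w ((a # B) @ Suc k # C)" using Cons.prems(1) zs by simp
      have iw: "is_word n w (a # zs)" using Cons.prems(1) by (simp add: reduced_word_def)
      have lett: "\<forall>b\<in>set C. 1 \<le> b \<and> b < n" using iw zs by (auto simp: is_word_def)
      let ?g = "word_perm C"
      have gp: "?g permutes {1..n}" using wp_permutes lett by blast
      obtain p where p: "p \<in> {1..n}" "?g p = Suc k" using perm_pre[OF gp, of "Suc k"] Cons.prems(3) by auto
      obtain q where q: "q \<in> {1..n}" "?g q = Suc (Suc k)"
        using perm_pre[OF gp, of "Suc (Suc k)"] Cons.prems(3) by auto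
      have pq: "p < q" using asc_suffix[OF r p(2) q(2)] .
      have fB: "word_perm B (Suc k) = Suc k" using wp_fix_mid[of B k] kB k1B by blast
      have wdef: "w = simple_trans a \<circ> word_perm B \<circ> simple_trans (Suc k) \<circ> ?g"
        using iw zs by (simp add: is_word_def wp_append comp_assoc)
      have "w q = k" using wdef q fB a by (simp add: st_apply)
      then have qk: "q \<le> Suc k"
      proof -
        assume wq: "w q = k"
        show "q \<le> Suc k"
        proof (rule ccontr)
          assume "\<not> q \<le> Suc k"
          then have "q \<in> {Suc (Suc k)..n}" using q(1) by auto
          then have "PF n k w" using wq unfolding PF_def by (intro bexI[of _ q]) auto
          then show False using Cons.prems(2) by simp
        qed
      qed
      have r': "reduced_word n w (((a # B) @ [Suc k]) @ C)" using r by simp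
      have npg: "\<not> PF n k ?g" using PF_mono[OF r', of k] Cons.prems(2) by blast
      have sub: "?g ` {Suc (Suc k)..n} \<subseteq> {Suc (Suc (Suc k))..n}"
      proof
        fix y assume "y \<in> ?g ` {Suc (Suc k)..n}"
        then obtain i0 where i0: "i0 \<in> {Suc (Suc k)..n}" "y = ?g i0" by blast
        have "i0 \<in> {1..n}" using i0 by auto
        then have "?g i0 \<in> {1..n}" using perm_range[OF gp] by blast
        moreover have "Suc k \<le> ?g i0"
        proof (rule ccontr)
          assume "\<not> Suc k \<le> ?g i0"
          then have "PF n k ?g" using i0(1) unfolding PF_def by (intro bexI[of _ i0]) auto
          then show False using npg by simp
        qed
        moreover have "?g i0 \<noteq> Suc k"
        proof
          assume "?g i0 = Suc k"
          then have "?g i0 = ?g p" using p(2) by simp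
          then have "i0 = p" by (rule injD[OF permutes_inj[OF gp]])
          then show False using i0 pq qk by simp
        qed
        moreover have "?g i0 \<noteq> Suc (Suc k)"
        proof
          assume "?g i0 = Suc (Suc k)"
          then have "?g i0 = ?g q" using q(2) by simp
          then have "i0 = q" by (rule injD[OF permutes_inj[OF gp]])
          then show False using i0 qk by simp
        qed
        ultimately show "y \<in> {Suc (Suc (Suc k))..n}" using i0 by auto
      qed
      have "card (?g ` {Suc (Suc k)..n}) = n - Suc k" using card_image[OF permutes_inj_on[OF gp]] by simp
      moreover have "card (?g ` {Suc (Suc k)..n}) \<le> n - Suc (Suc k)" using card_mono[OF _ sub] by simp
      ultimately show False using Cons.prems(3) by simp
    qed
  qed
qed

lemma reduced_cons:
  assumes r: "reduced_word n w' xs" and w': "w' = simple_trans a \<circ> w"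
    and c: "card (PInv n w') < card (PInv n w)" and a: "1 \<le> a" "a < n"
  shows "reduced_word n w (a # xs)"
proof -
  have iw: "is_word n w' xs" and len: "length xs = card (PInv n w')" using r reduced_iff by auto
  have "word_perm (a # xs) = w" using iw w' by (simp add: is_word_def fun_eq_iff)
  then have iw2: "is_word n w (a # xs)" using iw a by (auto simp: is_word_def)
  have "card (PInv n w) \<le> length (a # xs)" using card_PInv_le[of "a # xs" n] iw2 by (auto simp: is_word_def)
  then have "length (a # xs) = card (PInv n w)" using len c by simp
  then show ?thesis using iw2 reduced_iff by blast
qed

lemma G1:
  assumes "w permutes {1..n}" "PE k w" "1 \<le> k"
  shows "\<exists>xs. reduced_word n w xs \<and> (\<exists>i j. j < i \<and> i < length xs \<and> xs ! j = Suc k \<and> xs ! i = k)"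
  using assms
proof (induction "card (PInv n w)" arbitrary: w rule: less_induct)
  case less
  have ne: "PInv n w \<noteq> {}"
  proof
    assume "PInv n w = {}"
    then have "w = id" using PInv_empty_id less.prems(1) by blast
    then show False using less.prems(2) by (auto simp: PE_def)
  qed
  obtain a where a: "1 \<le> a" "a < n" "card (PInv n (simple_trans a \<circ> w)) < card (PInv n w)"
    using descent[OF less.prems(1) ne] by blast
  let ?w' = "simple_trans a \<circ> w"
  have wp': "?w' permutes {1..n}" using permutes_compose[OF less.prems(1) st_permutes[OF a(1,2)]] .
  show ?case
  proof (cases "a = Suc k")
    case False
    obtain i0 where i0: "i0 \<in> {1..k}" "Suc k < w i0" using less.prems(2) unfolding PE_def by blast
    have "Suc k < ?w' i0" using st_gt[OF False i0(2)] by simp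
    then have "PE k ?w'" using i0(1) unfolding PE_def by blast
    then obtain xs i j where xs: "reduced_word n ?w' xs" "j < i" "i < length xs" "xs ! j = Suc k" "xs ! i = k"
      using less.hyps[OF a(3) wp' _ less.prems(3)] by blast
    have "reduced_word n w (a # xs)" using reduced_cons[OF xs(1) refl a(3) a(1,2)] .
    then show ?thesis using xs by (intro exI[of _ "a # xs"] conjI exI[of _ "Suc i"] exI[of _ "Suc j"]) auto
  next
    case True
    obtain i where i: "i \<in> {1..k}" "Suc k < w i" using less.prems(2) by (auto simp: PE_def)
    have "Suc k \<le> ?w' i" using i True by (auto simp: st_apply)
    have "?w' ` {1..k} \<noteq> {1..k}"
    proof
      assume eq: "?w' ` {1..k} = {1..k}"
      have "?w' i \<in> ?w' ` {1..k}" using i(1) by (rule imageI)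
      then have "?w' i \<le> k" using eq by simp
      then show False using \<open>Suc k \<le> ?w' i\<close> by simp
    qed
    obtain xs where xs: "reduced_word n ?w' xs" using exists_reduced[OF wp'] by blast
    have "k \<in> set xs"
    proof (rule ccontr)
      assume "k \<notin> set xs"
      moreover have "\<forall>b\<in>set xs. 1 \<le> b" using xs by (auto simp: reduced_word_def is_word_def)
      ultimately have "word_perm xs ` {1..k} = {1..k}" using wp_fix_set less.prems(3) by blast
      moreover have "word_perm xs = ?w'" using xs by (simp add: reduced_word_def is_word_def)
      ultimately show False using \<open>?w' ` {1..k} \<noteq> {1..k}\<close> by simp
    qed
    then obtain i0 where i0: "i0 < length xs" "xs ! i0 = k" by (auto simp: in_set_conv_nth)
    have "reduced_word n w (a # xs)" using reduced_cons[OF xs refl a(3) a(1,2)] .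
    then show ?thesis using i0 True by (intro exI[of _ "a # xs"] conjI exI[of _ "Suc i0"] exI[of _ 0]) auto
  qed
qed

lemma G2:
  assumes "w permutes {1..n}" "PF n k w"
  shows "\<exists>xs. reduced_word n w xs \<and> (\<exists>i j. j < i \<and> i < length xs \<and> xs ! j = k \<and> xs ! i = Suc k)"
  using assms
proof (induction "card (PInv n w)" arbitrary: w rule: less_induct)
  case less
  have ne: "PInv n w \<noteq> {}"
  proof
    assume "PInv n w = {}"
    then have "w = id" using PInv_empty_id less.prems(1) by blast
    then show False using less.prems(2) by (auto simp: PF_def)
  qed
  obtain a where a: "1 \<le> a" "a < n" "card (PInv n (simple_trans a \<circ> w)) < card (PInv n w)"
    using descent[OF less.prems(1) ne] by blast
  let ?w' = "simple_trans a \<circ> w"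
  have wp': "?w' permutes {1..n}" using permutes_compose[OF less.prems(1) st_permutes[OF a(1,2)]] .
  show ?case
  proof (cases "a = k")
    case False
    obtain j0 where j0: "j0 \<in> {Suc (Suc k)..n}" "w j0 < Suc k" using less.prems(2) unfolding PF_def by blast
    have "?w' j0 < Suc k" using st_lt[OF False j0(2)] by simp
    then have "PF n k ?w'" using j0(1) unfolding PF_def by blast
    then obtain xs i j where xs: "reduced_word n ?w' xs" "j < i" "i < length xs" "xs ! j = k" "xs ! i = Suc k"
      using less.hyps[OF a(3) wp' \<open>PF n k ?w'\<close>] by blast
    have "reduced_word n w (a # xs)" using reduced_cons[OF xs(1) refl a(3) a(1,2)] .
    then show ?thesis using xs by (intro exI[of _ "a # xs"] conjI exI[of _ "Suc i"] exI[of _ "Suc j"]) auto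
  next
    case True
    obtain j where j: "j \<in> {Suc (Suc k)..n}" "w j < Suc k" using less.prems(2) unfolding PF_def by blast
    have jn: "j \<in> {1..n}" using j(1) by simp
    have wjn: "w j \<in> {1..n}" using perm_range[OF less.prems(1) jn] .
    have "1 \<le> w j" "w j \<le> k" using wjn j(2) by simp_all
    then have "1 \<le> simple_trans k (w j)" "simple_trans k (w j) \<le> Suc k" by (simp_all add: st_apply)
    then have wj: "?w' j \<in> {1..Suc k}" using True by simp
    have "?w' ` {1..Suc k} \<noteq> {1..Suc k}"
    proof
      assume "?w' ` {1..Suc k} = {1..Suc k}"
      then have "?w' j \<in> ?w' ` {1..Suc k}" using wj by simp
      then obtain j' where j'1: "j' \<in> {1..Suc k}" and j'2: "?w' j = ?w' j'" by (rule imageE)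
      have "j = j'" using injD[OF permutes_inj[OF wp'] j'2] .
      then have "j' = j" by simp
      then show False using \<open>j' \<in> {1..Suc k}\<close> j by auto
    qed
    obtain xs where xs: "reduced_word n ?w' xs" using exists_reduced[OF wp'] by blast
    have "Suc k \<in> set xs"
    proof (rule ccontr)
      assume "Suc k \<notin> set xs"
      moreover have "\<forall>b\<in>set xs. 1 \<le> b" using xs unfolding reduced_word_def is_word_def by blast
      ultimately have "word_perm xs ` {1..Suc k} = {1..Suc k}" by (intro wp_fix_set) simp_all
      moreover have "word_perm xs = ?w'" using xs by (simp add: reduced_word_def is_word_def)
      ultimately show False using \<open>?w' ` {1..Suc k} \<noteq> {1..Suc k}\<close> by simp
    qed
    then obtain i0 where i0: "i0 < length xs" "xs ! i0 = Suc k" by (auto simp: in_set_conv_nth)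
    have rr: "reduced_word n w (a # xs)" using reduced_cons[OF xs refl a(3) a(1,2)] .
    have e1: "(a # xs) ! 0 = k" using True by simp
    have e2: "(a # xs) ! Suc i0 = Suc k" using i0 by simp
    have e3: "Suc i0 < length (a # xs)" using i0 by simp
    have "0 < Suc i0" by simp
    then show ?thesis using rr e1 e2 e3 by blast
  qed
qed



lemma factor_card:
  assumes U: "U permutes {1..n}" and V: "V permutes {1..n}"
    and H: "\<And>p q. p \<in> {1..n} \<Longrightarrow> q \<in> {1..n} \<Longrightarrow> V p < V q \<Longrightarrow> U (V q) < U (V p) \<Longrightarrow> p < q"
  shows "card (PInv n U) + card (PInv n V) \<le> card (PInv n (U \<circ> V))"
proof -
  define X where "X = {(p,q). 1 \<le> p \<and> p < q \<and> q \<le> n \<and> V p < V q \<and> U (V q) < U (V p)}"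
  have finX: "finite X"
  proof -
    have "X \<subseteq> {1..n} \<times> {1..n}" by (auto simp: X_def)
    then show ?thesis by (rule finite_subset) auto
  qed
  have sub1: "PInv n U \<subseteq> (\<lambda>(p,q). (V p, V q)) ` X"
  proof
    fix x assume x: "x \<in> PInv n U"
    obtain a b where ab: "x = (a,b)" by (cases x)
    have a: "a \<in> {1..n}" and b: "b \<in> {1..n}" and lt: "a < b" and Ult: "U b < U a"
      using x ab by (auto simp: PInv_def)
    obtain p where p: "p \<in> {1..n}" "V p = a" using perm_pre[OF V a] by blast
    obtain q where q: "q \<in> {1..n}" "V q = b" using perm_pre[OF V b] by blast
    have "p < q" using H[OF p(1) q(1)] p q lt Ult by simp
    then have "(p,q) \<in> X" using p q lt Ult by (auto simp: X_def)
    then show "x \<in> (\<lambda>(p,q). (V p, V q)) ` X" using ab p q by force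
  qed
  have c1: "card (PInv n U) \<le> card X"
  proof -
    have "card (PInv n U) \<le> card ((\<lambda>(p,q). (V p, V q)) ` X)" using sub1 finX by (intro card_mono) auto
    also have "\<dots> \<le> card X" using finX by (rule card_image_le)
    finally show ?thesis .
  qed
  have disj: "X \<inter> PInv n V = {}" by (auto simp: X_def PInv_def)
  have sub2: "X \<union> PInv n V \<subseteq> PInv n (U \<circ> V)"
  proof
    fix x assume x: "x \<in> X \<union> PInv n V"
    obtain p q where pq: "x = (p,q)" by (cases x)
    show "x \<in> PInv n (U \<circ> V)"
    proof (cases "x \<in> X")
      case True then show ?thesis using pq by (auto simp: X_def PInv_def)
    next
      case False
      then have x2: "(p,q) \<in> PInv n V" using x pq by simp
      then have pin: "p \<in> {1..n}" and qin: "q \<in> {1..n}" and lt: "p < q" and Vlt: "V q < V p"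
        by (auto simp: PInv_def)
      have "U (V q) < U (V p)"
      proof (rule ccontr)
        assume "\<not> U (V q) < U (V p)"
        moreover have "U (V q) \<noteq> U (V p)"
        proof
          assume "U (V q) = U (V p)"
          then have "V q = V p" by (rule injD[OF permutes_inj[OF U]])
          then show False using Vlt by simp
        qed
        ultimately have "U (V p) < U (V q)" by simp
        then have "q < p" using H[OF qin pin Vlt] by simp
        then show False using lt by simp
      qed
      then show ?thesis using pq x2 by (auto simp: PInv_def)
    qed
  qed
  have "card X + card (PInv n V) = card (X \<union> PInv n V)" using finX disj by (intro card_Un_disjoint[symmetric]) auto
  also have "\<dots> \<le> card (PInv n (U \<circ> V))" using sub2 by (intro card_mono) auto
  finally show ?thesis using c1 by simp
qed

lemma concat_reduced:
  assumes U: "U permutes {1..n}" and V: "V permutes {1..n}"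
    and H: "\<And>p q. p \<in> {1..n} \<Longrightarrow> q \<in> {1..n} \<Longrightarrow> V p < V q \<Longrightarrow> U (V q) < U (V p) \<Longrightarrow> p < q"
    and ru: "reduced_word n U u" and rv: "reduced_word n V v"
  shows "reduced_word n (U \<circ> V) (u @ v)"
proof -
  have lu: "is_word n U u" "length u = card (PInv n U)" using ru reduced_iff by auto
  have lv: "is_word n V v" "length v = card (PInv n V)" using rv reduced_iff by auto
  have iw: "is_word n (U \<circ> V) (u @ v)" using lu(1) lv(1) by (auto simp: is_word_def wp_append)
  have "card (PInv n (U \<circ> V)) \<le> length (u @ v)"
    using card_PInv_le[of "u @ v" n] iw by (auto simp: is_word_def)
  moreover have "length (u @ v) \<le> card (PInv n (U \<circ> V))" using factor_card[OF U V H] lu(2) lv(2) by simp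
  ultimately show ?thesis using iw reduced_iff by (metis antisym)
qed

lemma supp_facts:
  assumes "i \<in> supp_perm n w"
  shows "1 \<le> i" "i < n" "w ` {1..i} \<noteq> {1..i}"
proof -
  obtain xs where xs: "reduced_word n w xs" "i \<in> set xs" using assms by (auto simp: supp_perm_def)
  then show "1 \<le> i" "i < n" by (auto simp: reduced_word_def is_word_def)
  show "w ` {1..i} \<noteq> {1..i}" using reduced_letter[OF xs] .
qed

lemma in_every:
  assumes r: "reduced_word n w xs" and i: "1 \<le> i" and ne: "w ` {1..i} \<noteq> {1..i}"
  shows "i \<in> set xs"
proof (rule ccontr)
  assume "i \<notin> set xs"
  moreover have "\<forall>b\<in>set xs. 1 \<le> b" using r unfolding reduced_word_def is_word_def by blast
  ultimately have "word_perm xs ` {1..i} = {1..i}" using i by (intro wp_fix_set) simp_all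
  moreover have "word_perm xs = w" using r by (simp add: reduced_word_def is_word_def)
  ultimately show False using ne by simp
qed



lemma part_a1:
  assumes w: "w permutes {1..n}" and k1: "1 \<le> k" and wk: "w ` {1..k} \<noteq> {1..k}"
    and wk1: "w ` {1..Suc k} \<noteq> {1..Suc k}"
    and r: "reduced_word n w (u @ v)" and lu: "\<forall>a\<in>set u. a \<le> k" and lv: "\<forall>a\<in>set v. Suc k \<le> a"
  shows "\<exists>x. 1 \<le> x \<and> x < Suc k \<and> w ` {1..k} = {1..Suc k} - {x} \<and> Suc k < inv w x"
proof -
  let ?U = "word_perm u" and ?V = "word_perm v"
  have iw: "is_word n w (u @ v)" using r by (simp add: reduced_word_def)
  have lett: "\<forall>a\<in>set u. 1 \<le> a \<and> a < n" "\<forall>a\<in>set v. 1 \<le> a \<and> a < n" using iw by (auto simp: is_word_def)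
  have wUV: "w = ?U \<circ> ?V" using iw by (simp add: is_word_def wp_append)
  have ru: "reduced_word n ?U u" using prefix_reduced[OF r] .
  have rv: "reduced_word n ?V v" using suffix_reduced[OF r] .
  have Up: "?U permutes {1..n}" using wp_permutes lett(1) by blast
  have Vp: "?V permutes {1..n}" using wp_permutes lett(2) by blast
  have "k \<in> set (u @ v)" using in_every[OF r k1 wk] .
  moreover have "k \<notin> set v" using lv by auto
  ultimately have ku: "k \<in> set u" by simp
  have "Suc k \<in> set (u @ v)" using in_every[OF r _ wk1] by simp
  moreover have "Suc k \<notin> set u" using lu by auto
  ultimately have kv: "Suc k \<in> set v" by simp
  have kn: "Suc k < n" using kv lett(2) by blast
  have lu': "\<forall>a\<in>set u. 1 \<le> a \<and> a \<le> k" using lu lett(1) by blast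
  have Ufix: "?U x = x" if "x \<notin> {1..Suc k}" for x using wp_fix_high[OF lu' that] .
  have Vfix: "?V x = x" if "x \<le> k" for x using wp_fix_low[OF lv that] .
  have Uk: "?U permutes {1..Suc k}" using perm_restrict[OF Up Ufix] .
  have UI: "?U ` {1..Suc k} = {1..Suc k}" using permutes_image[OF Uk] .
  have Un: "?U ` {1..k} \<noteq> {1..k}" using reduced_letter[OF ru ku] .
  have Vn: "?V ` {1..Suc k} \<noteq> {1..Suc k}" using reduced_letter[OF rv kv] .
  define x where "x = ?U (Suc k)"
  have wimg: "w ` {1..k} = ?U ` {1..k}"
    unfolding wUV by (rule image_cong[OF refl]) (simp add: Vfix)
  have split: "{1..Suc k} = insert (Suc k) {1..k}" by auto
  have xnot: "x \<notin> ?U ` {1..k}"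
  proof
    assume "x \<in> ?U ` {1..k}"
    then obtain i where i: "i \<in> {1..k}" "x = ?U i" by (rule imageE)
    then have "?U (Suc k) = ?U i" unfolding x_def by simp
    then have "Suc k = i" by (rule injD[OF permutes_inj[OF Up]])
    then show False using i by simp
  qed
  have "insert x (?U ` {1..k}) = {1..Suc k}" using UI unfolding x_def split by simp
  then have Uimg: "?U ` {1..k} = {1..Suc k} - {x}" using xnot by blast
  have "x \<in> ?U ` {1..Suc k}" unfolding x_def by (rule imageI) simp
  then have xr: "x \<in> {1..Suc k}" using UI by simp
  have xne: "x \<noteq> Suc k"
  proof
    assume "x = Suc k"
    then have "?U ` {1..k} = {1..Suc k} - {Suc k}" using Uimg by simp
    also have "\<dots> = {1..k}" by auto
    finally show False using Un by simp
  qed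
  have "Suc k \<in> {1..n}" using kn by simp
  then obtain q where q: "q \<in> {1..n}" "?V q = Suc k" using perm_pre[OF Vp] by blast
  have wq: "w q = x" using wUV q x_def by simp
  have invq: "inv w x = q" using permutes_inv_eq[OF w] wq by simp
  have "\<not> q \<le> k"
  proof
    assume "q \<le> k"
    then have "?V q = q" using Vfix by simp
    then show False using q \<open>q \<le> k\<close> by simp
  qed
  moreover have "q \<noteq> Suc k"
  proof
    assume "q = Suc k"
    then have VS: "?V (Suc k) = Suc k" using q by simp
    have "?V ` {1..Suc k} = id ` {1..Suc k}"
    proof (rule image_cong[OF refl])
      fix i assume "i \<in> {1..Suc k}"
      then have "i \<le> k \<or> i = Suc k" by auto
      then show "?V i = id i" using Vfix VS by auto
    qed
    then show False using Vn by simp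
  qed
  ultimately have "Suc k < q" by simp
  then show ?thesis using xr xne wimg Uimg invq by (intro exI[of _ x]) auto
qed

lemma part_a2:
  assumes w: "w permutes {1..n}" and k1: "1 \<le> k" and kn: "Suc k < n" and x1: "1 \<le> x" and xk: "x < Suc k"
    and wx: "w ` {1..k} = {1..Suc k} - {x}" and ix: "Suc k < inv w x"
  shows "\<exists>u v. reduced_word n w (u @ v) \<and> (\<forall>a\<in>set u. a \<le> k) \<and> (\<forall>a\<in>set v. Suc k \<le> a)"
proof -
  define U where "U = (\<lambda>i. if i \<in> {1..k} then w i else if i = Suc k then x else i)"
  have Ufix: "U i = i" if "i \<notin> {1..Suc k}" for i using that unfolding U_def by auto
  have split: "{1..Suc k} = insert (Suc k) {1..k}" by auto
  have Uw: "U ` {1..k} = w ` {1..k}" by (rule image_cong[OF refl]) (simp add: U_def)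
  have US: "U (Suc k) = x" by (simp add: U_def)
  have Uimg: "U ` {1..Suc k} = {1..Suc k}"
  proof -
    have "U ` {1..Suc k} = insert x (w ` {1..k})" unfolding split using Uw US by simp
    also have "\<dots> = {1..Suc k}" using wx x1 xk by auto
    finally show ?thesis .
  qed
  have Uinj: "inj_on U {1..Suc k}"
  proof (rule eq_card_imp_inj_on)
    show "finite {1..Suc k}" by simp
    show "card (U ` {1..Suc k}) = card {1..Suc k}" by (subst Uimg) (rule refl)
  qed
  have Uk: "U permutes {1..Suc k}"
  proof (rule bij_imp_permutes)
    show "bij_betw U {1..Suc k} {1..Suc k}" unfolding bij_betw_def using Uinj Uimg by blast
    show "U i = i" if "i \<notin> {1..Suc k}" for i using Ufix[OF that] .
  qed
  have Up: "U permutes {1..n}" using permutes_subset[OF Uk] kn by simp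
  define V where "V = inv U \<circ> w"
  have Vp: "V permutes {1..n}" unfolding V_def using permutes_compose[OF w permutes_inv[OF Up]] .
  have wUV: "w = U \<circ> V" unfolding V_def by (simp add: fun_eq_iff permutes_inverses[OF Up])
  have Vfix: "V i = i" if "i \<in> {1..k}" for i
  proof -
    have "U i = w i" using that by (simp add: U_def)
    then have "V i = inv U (U i)" by (simp add: V_def)
    then show ?thesis by (simp add: permutes_inverses[OF Up])
  qed
  obtain u where ru: "reduced_word n U u" using exists_reduced[OF Up] by blast
  obtain v where rv: "reduced_word n V v" using exists_reduced[OF Vp] by blast
  have lu: "\<forall>a\<in>set u. a \<le> k"
  proof
    fix a assume a: "a \<in> set u"
    show "a \<le> k"
    proof (rule ccontr)
      assume "\<not> a \<le> k"
      then have "{1..Suc k} \<subseteq> {1..a}" by auto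
      then have "U permutes {1..a}" using permutes_subset[OF Uk] by blast
      then have "U ` {1..a} = {1..a}" by (rule permutes_image)
      then show False using reduced_letter[OF ru a] by simp
    qed
  qed
  have lv: "\<forall>a\<in>set v. Suc k \<le> a"
  proof
    fix a assume a: "a \<in> set v"
    show "Suc k \<le> a"
    proof (rule ccontr)
      assume "\<not> Suc k \<le> a"
      have "V ` {1..a} = id ` {1..a}"
      proof (rule image_cong[OF refl])
        fix i assume "i \<in> {1..a}"
        then have "i \<in> {1..k}" using \<open>\<not> Suc k \<le> a\<close> by auto
        then show "V i = id i" using Vfix by simp
      qed
      then show False using reduced_letter[OF rv a] by simp
    qed
  qed
  have H: "p < q" if p: "p \<in> {1..n}" and q: "q \<in> {1..n}" and lt: "V p < V q" and Ult: "U (V q) < U (V p)" for p q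
  proof -
    define a where "a = V p"
    define b where "b = V q"
    have a1: "a \<in> {1..n}" unfolding a_def using perm_range[OF Vp p] .
    have b1: "b \<in> {1..n}" unfolding b_def using perm_range[OF Vp q] .
    have bk: "b \<le> Suc k"
    proof (rule ccontr)
      assume nb: "\<not> b \<le> Suc k"
      then have Ub: "U b = b" using Ufix by simp
      have "U a < b"
      proof (cases "a \<in> {1..Suc k}")
        case True
        then have "U a \<in> U ` {1..Suc k}" by (rule imageI)
        then have "U a \<le> Suc k" using Uimg by simp
        then show ?thesis using nb by simp
      next
        case False
        then have "U a = a" using Ufix by simp
        then show ?thesis using lt a_def b_def by simp
      qed
      then show False using Ult Ub a_def b_def by simp
    qed
    have ak: "a \<in> {1..k}" using a1 bk lt a_def b_def by auto
    have "V a = a" using Vfix[OF ak] .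
    then have "V p = V a" using a_def by simp
    then have pa: "p = a" by (rule injD[OF permutes_inj[OF Vp]])
    show "p < q"
    proof (cases "b \<le> k")
      case True
      then have "b \<in> {1..k}" using b1 by simp
      then have "V b = b" using Vfix by blast
      then have "V q = V b" using b_def by simp
      then have "q = b" by (rule injD[OF permutes_inj[OF Vp]])
      then show ?thesis using pa lt a_def b_def by simp
    next
      case False
      then have "b = Suc k" using bk by simp
      then have "w q = x" using wUV US b_def by simp
      then have "inv w x = q" using permutes_inv_eq[OF w] by simp
      then have "Suc k < q" using ix by simp
      then show ?thesis using pa ak by simp
    qed
  qed
  have "reduced_word n (U \<circ> V) (u @ v)" using concat_reduced[OF Up Vp H ru rv] .
  then have "reduced_word n w (u @ v)" using wUV by simp
  then show ?thesis using lu lv by blast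
qed



lemma part_b1:
  assumes w: "w permutes {1..n}" and k1: "1 \<le> k" and wk: "w ` {1..k} \<noteq> {1..k}"
    and wk1: "w ` {1..Suc k} \<noteq> {1..Suc k}"
    and r: "reduced_word n w (u @ v)" and lu: "\<forall>a\<in>set u. Suc k \<le> a" and lv: "\<forall>a\<in>set v. a \<le> k"
  shows "\<exists>y. Suc k < y \<and> y \<le> n \<and> w ` {Suc (Suc k)..n} = {Suc k..n} - {y} \<and> inv w y < Suc k"
proof -
  let ?A = "word_perm u" and ?B = "word_perm v"
  have iw: "is_word n w (u @ v)" using r by (simp add: reduced_word_def)
  have lett: "\<forall>a\<in>set u. 1 \<le> a \<and> a < n" "\<forall>a\<in>set v. 1 \<le> a \<and> a < n" using iw by (auto simp: is_word_def)
  have wAB: "w = ?A \<circ> ?B" using iw by (simp add: is_word_def wp_append)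
  have ra: "reduced_word n ?A u" using prefix_reduced[OF r] .
  have rb: "reduced_word n ?B v" using suffix_reduced[OF r] .
  have Ap: "?A permutes {1..n}" using wp_permutes lett(1) by blast
  have Bp: "?B permutes {1..n}" using wp_permutes lett(2) by blast
  have "k \<in> set (u @ v)" using in_every[OF r k1 wk] .
  moreover have "k \<notin> set u" using lu by auto
  ultimately have kv: "k \<in> set v" by simp
  have "Suc k \<in> set (u @ v)" using in_every[OF r _ wk1] by simp
  moreover have "Suc k \<notin> set v" using lv by auto
  ultimately have ku: "Suc k \<in> set u" by simp
  have kn: "Suc k < n" using ku lett(1) by blast
  have lv': "\<forall>a\<in>set v. 1 \<le> a \<and> a \<le> k" using lv lett(2) by blast
  have Bfix: "?B x = x" if "x \<notin> {1..Suc k}" for x using wp_fix_high[OF lv' that] .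
  have Afix: "?A x = x" if "x \<le> k" for x using wp_fix_low[OF lu that] .
  have Afix2: "?A x = x" if "x \<notin> {Suc k..n}" for x
  proof (cases "x \<le> k")
    case True then show ?thesis using Afix by simp
  next
    case False
    then have "x \<notin> {1..n}" using that by auto
    then show ?thesis using permutes_not_in[OF Ap] by simp
  qed
  have Ak: "?A permutes {Suc k..n}" using perm_restrict[OF Ap Afix2] .
  have Bk: "?B permutes {1..Suc k}" using perm_restrict[OF Bp Bfix] .
  have AI: "?A ` {Suc k..n} = {Suc k..n}" using permutes_image[OF Ak] .
  have BI: "?B ` {1..Suc k} = {1..Suc k}" using permutes_image[OF Bk] .
  have An: "?A ` {1..Suc k} \<noteq> {1..Suc k}" using reduced_letter[OF ra ku] .
  have Bn: "?B ` {1..k} \<noteq> {1..k}" using reduced_letter[OF rb kv] .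
  define y where "y = ?A (Suc k)"
  have "y \<in> ?A ` {Suc k..n}" unfolding y_def using kn by (intro imageI) simp
  then have yr: "y \<in> {Suc k..n}" using AI by simp
  have yne: "y \<noteq> Suc k"
  proof
    assume ys: "y = Suc k"
    have "?A ` {1..Suc k} = id ` {1..Suc k}"
    proof (rule image_cong[OF refl])
      fix i assume "i \<in> {1..Suc k}"
      then have "i \<le> k \<or> i = Suc k" by auto
      then show "?A i = id i" using Afix ys y_def by auto
    qed
    then show False using An by simp
  qed
  have wimg: "w ` {Suc (Suc k)..n} = ?A ` {Suc (Suc k)..n}"
    unfolding wAB by (rule image_cong[OF refl]) (simp add: Bfix)
  have split: "{Suc k..n} = insert (Suc k) {Suc (Suc k)..n}" using kn by auto
  have ynot: "y \<notin> ?A ` {Suc (Suc k)..n}"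
  proof
    assume "y \<in> ?A ` {Suc (Suc k)..n}"
    then obtain i where i: "i \<in> {Suc (Suc k)..n}" "y = ?A i" by (rule imageE)
    then have "?A (Suc k) = ?A i" unfolding y_def by simp
    then have "Suc k = i" by (rule injD[OF permutes_inj[OF Ap]])
    then show False using i by simp
  qed
  have "insert y (?A ` {Suc (Suc k)..n}) = {Suc k..n}" using AI unfolding y_def split by simp
  then have Aimg: "?A ` {Suc (Suc k)..n} = {Suc k..n} - {y}" using ynot by blast
  have "Suc k \<in> {1..n}" using kn by simp
  then obtain p where p: "p \<in> {1..n}" "?B p = Suc k" using perm_pre[OF Bp] by blast
  have "?B p \<in> {1..Suc k}" using p by simp
  then have p1: "p \<in> {1..Suc k}" using permutes_in_image[OF Bk] by blast
  have pne: "p \<noteq> Suc k"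
  proof
    assume "p = Suc k"
    then have BS: "?B (Suc k) = Suc k" using p by simp
    have "insert (Suc k) (?B ` {1..k}) = {1..Suc k}"
    proof -
      have "{1..Suc k} = insert (Suc k) {1..k}" by auto
      then have "?B ` {1..Suc k} = insert (?B (Suc k)) (?B ` {1..k})" by simp
      then show ?thesis using BI BS by simp
    qed
    moreover have "Suc k \<notin> ?B ` {1..k}"
    proof
      assume "Suc k \<in> ?B ` {1..k}"
      then obtain i where i: "i \<in> {1..k}" "Suc k = ?B i" by (rule imageE)
      then have "?B (Suc k) = ?B i" using BS by simp
      then have "Suc k = i" by (rule injD[OF permutes_inj[OF Bp]])
      then show False using i by simp
    qed
    ultimately have "?B ` {1..k} = {1..Suc k} - {Suc k}" by blast
    also have "\<dots> = {1..k}" by auto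
    finally show False using Bn by simp
  qed
  have "w p = y" using wAB p y_def by simp
  then have "inv w y = p" using permutes_inv_eq[OF w] by simp
  then have "inv w y < Suc k" using p1 pne by simp
  then show ?thesis using yr yne wimg Aimg by (intro exI[of _ y]) auto
qed

lemma part_b2:
  assumes w: "w permutes {1..n}" and kn: "Suc k < n" and yk: "Suc k < y" and yn: "y \<le> n"
    and wy: "w ` {Suc (Suc k)..n} = {Suc k..n} - {y}" and iy: "inv w y < Suc k"
  shows "\<exists>u v. reduced_word n w (u @ v) \<and> (\<forall>a\<in>set u. Suc k \<le> a) \<and> (\<forall>a\<in>set v. a \<le> k)"
proof -
  define A where "A = (\<lambda>i. if i \<in> {Suc (Suc k)..n} then w i else if i = Suc k then y else i)"
  have Afix: "A i = i" if "i \<notin> {Suc k..n}" for i using that kn unfolding A_def by auto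
  have split: "{Suc k..n} = insert (Suc k) {Suc (Suc k)..n}" using kn by auto
  have Aw: "A ` {Suc (Suc k)..n} = w ` {Suc (Suc k)..n}" by (rule image_cong[OF refl]) (simp add: A_def)
  have AS: "A (Suc k) = y" by (simp add: A_def)
  have Aimg: "A ` {Suc k..n} = {Suc k..n}"
  proof -
    have "A ` {Suc k..n} = insert y (w ` {Suc (Suc k)..n})" unfolding split using Aw AS by simp
    also have "\<dots> = {Suc k..n}" using wy yk yn by auto
    finally show ?thesis .
  qed
  have Ainj: "inj_on A {Suc k..n}"
  proof (rule eq_card_imp_inj_on)
    show "finite {Suc k..n}" by simp
    show "card (A ` {Suc k..n}) = card {Suc k..n}" by (subst Aimg) (rule refl)
  qed
  have Ak: "A permutes {Suc k..n}"
  proof (rule bij_imp_permutes)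
    show "bij_betw A {Suc k..n} {Suc k..n}" unfolding bij_betw_def using Ainj Aimg by blast
    show "A i = i" if "i \<notin> {Suc k..n}" for i using Afix[OF that] .
  qed
  have Ap: "A permutes {1..n}" using permutes_subset[OF Ak] by simp
  define B where "B = inv A \<circ> w"
  have Bp: "B permutes {1..n}" unfolding B_def using permutes_compose[OF w permutes_inv[OF Ap]] .
  have wAB: "w = A \<circ> B" unfolding B_def by (simp add: fun_eq_iff permutes_inverses[OF Ap])
  have Bfix: "B i = i" if "i \<in> {Suc (Suc k)..n}" for i
  proof -
    have "A i = w i" using that by (simp add: A_def)
    then have "B i = inv A (A i)" by (simp add: B_def)
    then show ?thesis by (simp add: permutes_inverses[OF Ap])
  qed
  have Bfix2: "B i = i" if "i \<notin> {1..Suc k}" for i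
  proof (cases "i \<in> {Suc (Suc k)..n}")
    case True then show ?thesis using Bfix by simp
  next
    case False
    then have "i \<notin> {1..n}" using that by auto
    then show ?thesis using permutes_not_in[OF Bp] by simp
  qed
  have Bk: "B permutes {1..Suc k}" using perm_restrict[OF Bp Bfix2] .
  obtain u where ru: "reduced_word n A u" using exists_reduced[OF Ap] by blast
  obtain v where rv: "reduced_word n B v" using exists_reduced[OF Bp] by blast
  have lu: "\<forall>a\<in>set u. Suc k \<le> a"
  proof
    fix a assume a: "a \<in> set u"
    show "Suc k \<le> a"
    proof (rule ccontr)
      assume na: "\<not> Suc k \<le> a"
      have "A ` {1..a} = id ` {1..a}"
      proof (rule image_cong[OF refl])
        fix i assume "i \<in> {1..a}"
        then have "i \<notin> {Suc k..n}" using na by auto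
        then show "A i = id i" using Afix by simp
      qed
      then show False using reduced_letter[OF ru a] by simp
    qed
  qed
  have lv: "\<forall>a\<in>set v. a \<le> k"
  proof
    fix a assume a: "a \<in> set v"
    show "a \<le> k"
    proof (rule ccontr)
      assume "\<not> a \<le> k"
      then have "{1..Suc k} \<subseteq> {1..a}" by auto
      then have "B permutes {1..a}" using permutes_subset[OF Bk] by blast
      then have "B ` {1..a} = {1..a}" by (rule permutes_image)
      then show False using reduced_letter[OF rv a] by simp
    qed
  qed
  have H: "p < q" if p: "p \<in> {1..n}" and q: "q \<in> {1..n}" and lt: "B p < B q" and Alt: "A (B q) < A (B p)" for p q
  proof -
    define a where "a = B p"
    define b where "b = B q"
    have a1: "a \<in> {1..n}" unfolding a_def using perm_range[OF Bp p] .
    have b1: "b \<in> {1..n}" unfolding b_def using perm_range[OF Bp q] .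
    have ak: "Suc k \<le> a"
    proof (rule ccontr)
      assume na: "\<not> Suc k \<le> a"
      then have Aa: "A a = a" using Afix by simp
      have "a < A b"
      proof (cases "b \<in> {Suc k..n}")
        case True
        then have "A b \<in> A ` {Suc k..n}" by (rule imageI)
        then have "Suc k \<le> A b" using Aimg by simp
        then show ?thesis using na by simp
      next
        case False
        then have "A b = b" using Afix by simp
        then show ?thesis using lt a_def b_def by simp
      qed
      then show False using Alt Aa a_def b_def by simp
    qed
    have bk: "b \<in> {Suc (Suc k)..n}" using b1 ak lt a_def b_def by auto
    have "B b = b" using Bfix[OF bk] .
    then have "B q = B b" using b_def by simp
    then have qb: "q = b" by (rule injD[OF permutes_inj[OF Bp]])
    show "p < q"
    proof (cases "a = Suc k")
      case False
      then have "a \<in> {Suc (Suc k)..n}" using a1 ak by auto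
      then have "B a = a" using Bfix by blast
      then have "B p = B a" using a_def by simp
      then have "p = a" by (rule injD[OF permutes_inj[OF Bp]])
      then show ?thesis using qb lt a_def b_def by simp
    next
      case True
      then have "w p = y" using wAB AS a_def by simp
      then have "inv w y = p" using permutes_inv_eq[OF w] by simp
      then have "p < Suc k" using iy by simp
      then show ?thesis using qb bk by simp
    qed
  qed
  have "reduced_word n (A \<circ> B) (u @ v)" using concat_reduced[OF Ap Bp H ru rv] .
  then have "reduced_word n w (u @ v)" using wAB by simp
  then show ?thesis using lu lv by blast
qed



theorem theorem3p11:
  fixes n k :: nat and w :: "nat \<Rightarrow> nat"
  assumes "w permutes {1..n}"
    and "k \<in> supp_perm n w" and "k + 1 \<in> supp_perm n w"
  shows "((\<exists>u v. reduced_word n w (u @ v) \<and> (\<forall>a\<in>set u. a \<le> k) \<and> (\<forall>a\<in>set v. a \<ge> k + 1))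
           \<longleftrightarrow> (\<exists>x. 1 \<le> x \<and> x < k + 1 \<and> w ` {1..k} = {1..k+1} - {x} \<and> inv w x > k + 1))
       \<and> ((\<exists>u v. reduced_word n w (u @ v) \<and> (\<forall>a\<in>set u. a \<ge> k + 1) \<and> (\<forall>a\<in>set v. a \<le> k))
           \<longleftrightarrow> (\<exists>y. k + 1 < y \<and> y \<le> n \<and> w ` {k+2..n} = {k+1..n} - {y} \<and> inv w y < k + 1))
       \<and> (interlaced n w k
           \<longleftrightarrow> (\<exists>i\<in>{1..k}. \<exists>j\<in>{k+2..n}. w i > k + 1 \<and> w j < k + 1))"
proof -
  have w: "w permutes {1..n}" by fact
  have k1: "1 \<le> k" and wk: "w ` {1..k} \<noteq> {1..k}" using supp_facts[OF assms(2)] by auto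
  have kn: "Suc k < n" and wk1: "w ` {1..Suc k} \<noteq> {1..Suc k}" using supp_facts[OF assms(3)] by auto
  have e1: "k + 1 = Suc k" and e2: "k + 2 = Suc (Suc k)" by simp_all
  have PA: "(\<exists>u v. reduced_word n w (u @ v) \<and> (\<forall>a\<in>set u. a \<le> k) \<and> (\<forall>a\<in>set v. Suc k \<le> a))
           \<longleftrightarrow> (\<exists>x. 1 \<le> x \<and> x < Suc k \<and> w ` {1..k} = {1..Suc k} - {x} \<and> Suc k < inv w x)"
  proof
    assume "\<exists>u v. reduced_word n w (u @ v) \<and> (\<forall>a\<in>set u. a \<le> k) \<and> (\<forall>a\<in>set v. Suc k \<le> a)"
    then obtain u v where uv: "reduced_word n w (u @ v)" "\<forall>a\<in>set u. a \<le> k" "\<forall>a\<in>set v. Suc k \<le> a" by blast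
    show "\<exists>x. 1 \<le> x \<and> x < Suc k \<and> w ` {1..k} = {1..Suc k} - {x} \<and> Suc k < inv w x"
      using part_a1[OF w k1 wk wk1 uv] .
  next
    assume "\<exists>x. 1 \<le> x \<and> x < Suc k \<and> w ` {1..k} = {1..Suc k} - {x} \<and> Suc k < inv w x"
    then obtain x where x: "1 \<le> x" "x < Suc k" "w ` {1..k} = {1..Suc k} - {x}" "Suc k < inv w x" by blast
    show "\<exists>u v. reduced_word n w (u @ v) \<and> (\<forall>a\<in>set u. a \<le> k) \<and> (\<forall>a\<in>set v. Suc k \<le> a)"
      using part_a2[OF w k1 kn x] .
  qed
  have PB: "(\<exists>u v. reduced_word n w (u @ v) \<and> (\<forall>a\<in>set u. Suc k \<le> a) \<and> (\<forall>a\<in>set v. a \<le> k))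
           \<longleftrightarrow> (\<exists>y. Suc k < y \<and> y \<le> n \<and> w ` {Suc (Suc k)..n} = {Suc k..n} - {y} \<and> inv w y < Suc k)"
  proof
    assume "\<exists>u v. reduced_word n w (u @ v) \<and> (\<forall>a\<in>set u. Suc k \<le> a) \<and> (\<forall>a\<in>set v. a \<le> k)"
    then obtain u v where uv: "reduced_word n w (u @ v)" "\<forall>a\<in>set u. Suc k \<le> a" "\<forall>a\<in>set v. a \<le> k" by blast
    show "\<exists>y. Suc k < y \<and> y \<le> n \<and> w ` {Suc (Suc k)..n} = {Suc k..n} - {y} \<and> inv w y < Suc k"
      using part_b1[OF w k1 wk wk1 uv] .
  next
    assume "\<exists>y. Suc k < y \<and> y \<le> n \<and> w ` {Suc (Suc k)..n} = {Suc k..n} - {y} \<and> inv w y < Suc k"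
    then obtain y where y: "Suc k < y" "y \<le> n" "w ` {Suc (Suc k)..n} = {Suc k..n} - {y}" "inv w y < Suc k" by blast
    show "\<exists>u v. reduced_word n w (u @ v) \<and> (\<forall>a\<in>set u. Suc k \<le> a) \<and> (\<forall>a\<in>set v. a \<le> k)"
      using part_b2[OF w kn y] .
  qed
  have PC: "interlaced n w k \<longleftrightarrow> PE k w \<and> PF n k w"
  proof
    assume il: "interlaced n w k"
    have "PE k w"
    proof (rule ccontr)
      assume npe: "\<not> PE k w"
      have "increasing_orient n w k" unfolding increasing_orient_def
      proof (intro allI impI)
        fix xs i j
        assume r: "reduced_word n w xs" and ij: "i < length xs \<and> j < length xs \<and> xs ! i = k \<and> xs ! j = Suc k"
        have np: "\<not> (\<exists>i j. j < i \<and> i < length xs \<and> xs ! j = Suc k \<and> xs ! i = k)" using no_pat1[OF r npe k1] .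
        have "i \<noteq> j" using ij by auto
        moreover have "\<not> j < i" using np ij by blast
        ultimately show "i < j" by simp
      qed
      then show False using il by (simp add: interlaced_def)
    qed
    moreover have "PF n k w"
    proof (rule ccontr)
      assume npf: "\<not> PF n k w"
      have "decreasing_orient n w k" unfolding decreasing_orient_def
      proof (intro allI impI)
        fix xs i j
        assume r: "reduced_word n w xs" and ij: "i < length xs \<and> j < length xs \<and> xs ! i = k \<and> xs ! j = Suc k"
        have np: "\<not> (\<exists>i j. j < i \<and> i < length xs \<and> xs ! j = k \<and> xs ! i = Suc k)" using no_pat2[OF r npf kn] .
        have "i \<noteq> j" using ij by auto
        moreover have "\<not> i < j" using np ij by blast
        ultimately show "j < i" by simp
      qed
      then show False using il by (simp add: interlaced_def)
    qed
    ultimately show "PE k w \<and> PF n k w" by simp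
  next
    assume pp: "PE k w \<and> PF n k w"
    obtain xs i j where xs: "reduced_word n w xs" "j < i" "i < length xs" "xs ! j = Suc k" "xs ! i = k"
      using G1[OF w _ k1] pp by blast
    have ni: "\<not> increasing_orient n w k"
    proof
      assume "increasing_orient n w k"
      then have "i < j" using xs unfolding increasing_orient_def by auto
      then show False using xs by simp
    qed
    obtain ys i' j' where ys: "reduced_word n w ys" "j' < i'" "i' < length ys" "ys ! j' = k" "ys ! i' = Suc k"
      using G2[OF w] pp by blast
    have nd: "\<not> decreasing_orient n w k"
    proof
      assume "decreasing_orient n w k"
      then have "i' < j'" using ys unfolding decreasing_orient_def by auto
      then show False using ys by simp
    qed
    show "interlaced n w k" using ni nd assms(2,3) by (simp add: interlaced_def)
  qed
  have PC': "(\<exists>i\<in>{1..k}. \<exists>j\<in>{Suc (Suc k)..n}. Suc k < w i \<and> w j < Suc k) \<longleftrightarrow> PE k w \<and> PF n k w"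
    unfolding PE_def PF_def by blast
  show ?thesis unfolding e1 e2 using PA PB PC PC' by simp
qed

end
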